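(* Let $K\ge1$, let $q_1,\dots,q_K$ be distinct primes, $p=q_1\cdots q_K$, $Q=\sum_{j=1}^K 1/q_j$, and let $d\ge0$ be an integer. For each $j$ let $\Lambda_j=q_j\mathbb Z$ and $$\Lambda_j^-=\{n\in\Lambda_j:\ \exists\, j'\ne j,\ \exists\, n'\in\Lambda_{j'}\text{ with }|n-n'|\le d\},\qquad \Lambda=\bigcup_{j=1}^K(\Lambda_j\setminus\Lambda_j^-).$$ Then for every integer $n_0$, $$pQ\Big(1-\frac{2K(d+1)}{\min_{j}q_j}\Big)<\#\big(\Lambda\cap[n_0,n_0+p)\big)\le pQ.$$ *)

theory Defs
  imports Complex_Main "HOL-Computational_Algebra.Primes"
begin

definition Lam :: "(nat \<Rightarrow> nat) \<Rightarrow> nat \<Rightarrow> int set" where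
  "Lam q j = {n. int (q j) dvd n}"

definition Lam_minus :: "nat \<Rightarrow> (nat \<Rightarrow> nat) \<Rightarrow> nat \<Rightarrow> nat \<Rightarrow> int set" where
  "Lam_minus K q d j = {n \<in> Lam q j. \<exists>j'\<in>{1..K}. j' \<noteq> j \<and> (\<exists>n'\<in>Lam q j'. \<bar>n - n'\<bar> \<le> int d)}"

definition LamU :: "nat \<Rightarrow> (nat \<Rightarrow> nat) \<Rightarrow> nat \<Rightarrow> int set" where
  "LamU K q d = (\<Union>j\<in>{1..K}. Lam q j - Lam_minus K q d j)"

end

theory Submission
  imports Defs
begin

lemma block_count:
  fixes b r :: int and c :: nat assumes "c > 0"
  shows "card {n\<in>{b..<b + int c}. n mod int c = r mod int c} = 1"
proof -
  have "{n\<in>{b..<b + int c}. n mod int c = r mod int c} = {b + (r - b) mod int c}"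
  proof safe
    fix n assume h: "n \<in> {b..<b + int c}" "n mod int c = r mod int c"
    have "(n - b) mod int c = (r - b) mod int c" using h(2) by (metis mod_diff_left_eq)
    moreover have "(n - b) mod int c = n - b" using h(1) by auto
    ultimately show "n = b + (r - b) mod int c" by simp
  next
    show "b + (r - b) mod int c \<in> {b..<b + int c}" using assms by simp
  next
    show "(b + (r - b) mod int c) mod int c = r mod int c"
      by (metis add.commute diff_add_cancel mod_add_left_eq)
  qed
  then show ?thesis by simp
qed

lemma count_res:
  fixes a r :: int and c m :: nat assumes "c > 0"
  shows "card {n\<in>{a..<a + int m * int c}. n mod int c = r mod int c} = m"
proof (induction m)
  case 0 then show ?case by simp
next
  case (Suc m)
  let ?P = "\<lambda>n. n mod int c = r mod int c"
  have eq: "{n\<in>{a..<a + int (Suc m) * int c}. ?P n} =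
     {n\<in>{a..<a + int m * int c}. ?P n} \<union> {n\<in>{(a + int m * int c)..<(a + int m * int c) + int c}. ?P n}"
  proof -
    have "0 \<le> int c * int m" by simp
    then show ?thesis apply (auto simp: algebra_simps) using \<open>0 \<le> int c * int m\<close> by linarith
  qed
  have "card ({n\<in>{a..<a + int m * int c}. ?P n} \<union> {n\<in>{(a + int m * int c)..<(a + int m * int c) + int c}. ?P n})
      = card {n\<in>{a..<a + int m * int c}. ?P n} + card {n\<in>{(a + int m * int c)..<(a + int m * int c) + int c}. ?P n}"
    by (rule card_Un_disjoint, (rule finite_subset[OF _ finite_atLeastLessThan_int], blast)+, auto)
  then show ?case using eq Suc block_count[OF assms] by simp
qed

lemma count_res_dvd:
  fixes a r :: int and c p :: nat assumes "c > 0" "c dvd p"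
  shows "card {n\<in>{a..<a + int p}. n mod int c = r mod int c} = p div c"
proof -
  have "int p = int (p div c) * int c" using assms by (metis dvd_div_mult_self of_nat_mult)
  then show ?thesis using count_res[OF assms(1), of a "p div c" r] by simp
qed

lemma crt2:
  fixes a b :: nat and r :: int assumes "coprime a b"
  shows "\<exists>s. \<forall>n::int. (int a dvd n \<and> int b dvd (n - r)) \<longleftrightarrow> n mod int (a*b) = s mod int (a*b)"
proof -
  have cp: "coprime (int a) (int b)" using assms by simp
  obtain u v where uv: "u * int a + v * int b = 1" using bezout_int[of "int a" "int b"] cp by (auto simp: coprime_iff_gcd_eq_1)
  define s where "s = r * u * int a"
  have sa: "int a dvd s" unfolding s_def by simp
  have sb: "int b dvd (s - r)"
  proof -
    have "s - r = r * (u * int a - 1)" unfolding s_def by (simp add: algebra_simps)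
    also have "\<dots> = - (r * v) * int b" proof -
      have "u * int a - 1 = - (v * int b)" using uv by linarith
      then show ?thesis by simp
    qed
    finally show ?thesis by simp
  qed
  show ?thesis
  proof (intro exI allI iffI)
    fix n :: int assume h: "int a dvd n \<and> int b dvd (n - r)"
    have 1: "int a dvd (n - s)" using h sa by simp
    have "int b dvd ((n - r) - (s - r))" using h sb dvd_diff by blast
    then have 2: "int b dvd (n - s)" by simp
    have "int a * int b dvd (n - s)" using divides_mult[OF 1 2 cp] .
    then show "n mod int (a*b) = s mod int (a*b)" by (simp add: mod_eq_dvd_iff)
  next
    fix n :: int assume "n mod int (a*b) = s mod int (a*b)"
    then have h: "int a * int b dvd (n - s)" by (simp add: mod_eq_dvd_iff)
    then have "int a dvd (n - s)" "int b dvd (n - s)" using dvd_mult_left dvd_mult_right by blast+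
    moreover have "n = (n - s) + s" "n - r = (n - s) + (s - r)" by simp_all
    ultimately show "int a dvd n \<and> int b dvd (n - r)" using sa sb
      by (metis dvd_add)
  qed
qed

lemma count_crt:
  fixes a b p :: nat and r n0 :: int
  assumes "coprime a b" "a > 0" "b > 0" "a * b dvd p"
  shows "card {n\<in>{n0..<n0 + int p}. int a dvd n \<and> int b dvd (n - r)} = p div (a * b)"
proof -
  obtain s where s: "\<forall>n::int. (int a dvd n \<and> int b dvd (n - r)) \<longleftrightarrow> n mod int (a*b) = s mod int (a*b)"
    using crt2[OF assms(1)] by blast
  have "{n\<in>{n0..<n0 + int p}. int a dvd n \<and> int b dvd (n - r)} = {n\<in>{n0..<n0 + int p}. n mod int (a*b) = s mod int (a*b)}"
    using s by blast
  then show ?thesis using count_res_dvd[of "a*b" p n0 s] assms by simp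
qed

theorem mainTheorem4:
  fixes K d :: nat and q :: "nat \<Rightarrow> nat" and p :: nat and Q :: real and n0 :: int
  assumes "K \<ge> 1"
    and "\<And>j. j \<in> {1..K} \<Longrightarrow> prime (q j)"
    and "inj_on q {1..K}"
    and "p = (\<Prod>j\<in>{1..K}. q j)"
    and "Q = (\<Sum>j\<in>{1..K}. 1 / real (q j))"
  shows "real p * Q * (1 - 2 * real K * (real d + 1) / real (Min (q ` {1..K})))
           < real (card (LamU K q d \<inter> {n0..<n0 + int p}))
       \<and> real (card (LamU K q d \<inter> {n0..<n0 + int p})) \<le> real p * Q"
proof -
  define I where "I = {1..K}"
  define W where "W = {n0..<n0 + int p}"
  define mn where "mn = Min (q ` I)"
  define LM where "LM = Lam_minus K q d"
  have finI: "finite I" unfolding I_def by simp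
  have Ine: "I \<noteq> {}" using assms(1) unfolding I_def by auto
  have cardI: "card I = K" unfolding I_def by simp
  have qgt: "q j > 1" if "j \<in> I" for j using assms(2) that prime_gt_1_nat unfolding I_def by blast
  have mnle: "mn \<le> q j" if "j \<in> I" for j unfolding mn_def using finI that by simp
  have mngt: "mn > 1" proof -
    have "mn \<in> q ` I" unfolding mn_def using finI Ine by simp
    then show ?thesis using qgt by auto
  qed
  have dvdp: "q j dvd p" if "j \<in> I" for j unfolding assms(4) using that finI I_def dvd_prodI by blast
  have dvdp2: "q j * q j' dvd p" if "j \<in> I" "j' \<in> I" "j \<noteq> j'" for j j'
  proof -
    have "prod q {j, j'} dvd p" unfolding assms(4) using that finI I_def
      by (intro prod_dvd_prod_subset) auto
    then show ?thesis using that by simp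
  qed
  have cop: "coprime (q j) (q j')" if "j \<in> I" "j' \<in> I" "j \<noteq> j'" for j j'
  proof -
    have "q j \<noteq> q j'" using assms(3) that unfolding I_def inj_on_def by blast
    then show ?thesis using assms(2) that primes_coprime unfolding I_def by blast
  qed
  have LamW: "card (Lam q j \<inter> W) = p div q j" if "j \<in> I" for j
  proof -
    have "Lam q j \<inter> W = {n\<in>{n0..<n0 + int p}. n mod int (q j) = 0 mod int (q j)}"
      unfolding Lam_def W_def by (auto simp: dvd_eq_mod_eq_0)
    then show ?thesis using count_res_dvd[of "q j" p n0 0] qgt[OF that] dvdp[OF that] by simp
  qed
  have LamWr: "real (card (Lam q j \<inter> W)) = real p / real (q j)" if "j \<in> I" for j
    using LamW[OF that] dvdp[OF that] real_of_nat_div by simp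
  define A where "A j = (Lam q j - LM j) \<inter> W" for j
  have finW: "finite W" unfolding W_def by simp
  have U: "LamU K q d \<inter> W = (\<Union>j\<in>I. A j)" unfolding LamU_def A_def I_def LM_def by blast
  have disj: "A j \<inter> A j' = {}" if "j \<in> I" "j' \<in> I" "j \<noteq> j'" for j j'
  proof (rule ccontr)
    assume "A j \<inter> A j' \<noteq> {}"
    then obtain n where n: "n \<in> Lam q j" "n \<notin> LM j" "n \<in> Lam q j'" unfolding A_def by blast
    have "n \<in> LM j" unfolding LM_def Lam_minus_def using n(1,3) that I_def
      by (intro CollectI conjI bexI[of _ j']) (auto intro!: bexI[of _ n])
    then show False using n(2) by blast
  qed
  have cardU: "card (LamU K q d \<inter> W) = (\<Sum>j\<in>I. card (A j))"
    unfolding U using finI finW disj unfolding A_def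
    by (intro card_UN_disjoint) auto
  have cardA: "card (A j) = card (Lam q j \<inter> W) - card (LM j \<inter> W)"
     "LM j \<inter> W \<subseteq> Lam q j \<inter> W" for j
  proof -
    show sub: "LM j \<inter> W \<subseteq> Lam q j \<inter> W" unfolding LM_def Lam_minus_def by blast
    have "A j = (Lam q j \<inter> W) - (LM j \<inter> W)" unfolding A_def by blast
    then show "card (A j) = card (Lam q j \<inter> W) - card (LM j \<inter> W)"
      using sub finW by (simp add: card_Diff_subset finite_subset)
  qed
  have cardAr: "real (card (A j)) = real p / real (q j) - real (card (LM j \<inter> W))" if "j \<in> I" for j
  proof -
    have "card (LM j \<inter> W) \<le> card (Lam q j \<inter> W)" using cardA(2)[of j] finW by (intro card_mono) auto
    then show ?thesis using cardA(1)[of j] LamWr[OF that] by (simp add: of_nat_diff)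
  qed
  define S where "S j j' r = {n\<in>{n0..<n0 + int p}. int (q j) dvd n \<and> int (q j') dvd (n - r)}" for j j' r
  have LMbound: "real (card (LM j \<inter> W)) \<le> real K * (2 * real d + 1) * real p / (real (q j) * real mn)"
    if "j \<in> I" for j
  proof -
    have sub: "LM j \<inter> W \<subseteq> (\<Union>j'\<in>I - {j}. \<Union>r\<in>{- int d..int d}. S j j' r)"
    proof
      fix n assume "n \<in> LM j \<inter> W"
      then obtain j' n' where h: "n \<in> Lam q j" "j' \<in> I" "j' \<noteq> j" "n' \<in> Lam q j'" "\<bar>n - n'\<bar> \<le> int d" "n \<in> W"
        unfolding LM_def Lam_minus_def I_def by blast
      have "n \<in> S j j' (n - n')" unfolding S_def using h(1,4,6) unfolding Lam_def W_def by auto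
      moreover have "n - n' \<in> {- int d..int d}" using h(5) by auto
      ultimately show "n \<in> (\<Union>j'\<in>I - {j}. \<Union>r\<in>{- int d..int d}. S j j' r)" using h(2,3) by blast
    qed
    have "card (LM j \<inter> W) \<le> card (\<Union>j'\<in>I - {j}. \<Union>r\<in>{- int d..int d}. S j j' r)"
      by (rule card_mono[OF _ sub]) (auto simp: finI S_def intro!: finite_subset[OF _ finite_atLeastLessThan_int[of n0 "n0 + int p"]])
    also have "\<dots> \<le> (\<Sum>j'\<in>I - {j}. card (\<Union>r\<in>{- int d..int d}. S j j' r))"
      using finI by (intro card_UN_le) auto
    also have "\<dots> \<le> (\<Sum>j'\<in>I - {j}. (\<Sum>r\<in>{- int d..int d}. card (S j j' r)))"
      by (intro sum_mono card_UN_le) auto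
    also have "\<dots> = (\<Sum>j'\<in>I - {j}. (2 * d + 1) * (p div (q j * q j')))"
    proof (intro sum.cong refl)
      fix j' assume j': "j' \<in> I - {j}"
      have "card (S j j' r) = p div (q j * q j')" for r
        unfolding S_def using j' that qgt[of j] qgt[of j'] cop dvdp2 by (intro count_crt) auto
      then show "(\<Sum>r\<in>{- int d..int d}. card (S j j' r)) = (2 * d + 1) * (p div (q j * q j'))"
        by (simp add: nat_add_distrib nat_mult_distrib algebra_simps)
    qed
    finally have c1: "real (card (LM j \<inter> W)) \<le> (\<Sum>j'\<in>I - {j}. real ((2 * d + 1) * (p div (q j * q j'))))"
      by (simp only: of_nat_le_iff of_nat_sum[symmetric])
    also have "\<dots> \<le> (\<Sum>j'\<in>I - {j}. (2 * real d + 1) * real p / (real (q j) * real mn))"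
    proof (intro sum_mono)
      fix j' assume j': "j' \<in> I - {j}"
      have "real (p div (q j * q j')) = real p / (real (q j) * real (q j'))"
        using dvdp2[of j j'] j' that by (simp add: real_of_nat_div)
      also have "\<dots> \<le> real p / (real (q j) * real mn)"
        using mnle[of j'] j' mngt qgt[OF that]
        by (intro divide_left_mono mult_left_mono) auto
      finally have "(2 * real d + 1) * real (p div (q j * q j')) \<le> (2 * real d + 1) * (real p / (real (q j) * real mn))"
        by (intro mult_left_mono) auto
      then show "real ((2 * d + 1) * (p div (q j * q j'))) \<le> (2 * real d + 1) * real p / (real (q j) * real mn)"
        by (simp add: algebra_simps)
    qed
    also have "\<dots> = real (card (I - {j})) * ((2 * real d + 1) * real p / (real (q j) * real mn))"
      by simp
    also have "\<dots> \<le> real K * ((2 * real d + 1) * real p / (real (q j) * real mn))"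
      using cardI finI by (intro mult_right_mono) (auto simp: card_Diff_singleton_if)
    finally show ?thesis by simp
  qed
  have pQ: "real p * Q = (\<Sum>j\<in>I. real p / real (q j))"
    unfolding assms(5) I_def by (simp add: sum_distrib_left)
  have cardUr: "real (card (LamU K q d \<inter> W)) = (\<Sum>j\<in>I. real p / real (q j) - real (card (LM j \<inter> W)))"
    using cardU cardAr by simp
  have upper: "real (card (LamU K q d \<inter> W)) \<le> real p * Q"
    unfolding cardUr pQ by (intro sum_mono) auto
  define c where "c = real K * (2 * real d + 1) / real mn"
  have lower1: "real (card (LamU K q d \<inter> W)) \<ge> real p * Q - c * (real p * Q)"
  proof -
    have "real p * Q - c * (real p * Q) = (\<Sum>j\<in>I. real p / real (q j) - real K * (2 * real d + 1) * real p / (real (q j) * real mn))"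
      
    proof -
      have "c * (\<Sum>j\<in>I. real p / real (q j)) = (\<Sum>j\<in>I. c * (real p / real (q j)))"
        by (rule sum_distrib_left)
      also have "\<dots> = (\<Sum>j\<in>I. real K * (2 * real d + 1) * real p / (real (q j) * real mn))"
        by (intro sum.cong refl) (simp add: c_def)
      finally show ?thesis unfolding pQ by (simp add: sum_subtractf)
    qed
    also have "\<dots> \<le> real (card (LamU K q d \<inter> W))"
      unfolding cardUr using LMbound by (intro sum_mono) auto
    finally show ?thesis by simp
  qed
  have Qpos: "real p * Q > 0"
  proof -
    have pp: "p > 0" unfolding assms(4) using qgt unfolding I_def by (intro prod_pos) (meson less_trans zero_less_one)
    have qp: "\<And>j. j \<in> {1..K} \<Longrightarrow> q j > 0" using qgt unfolding I_def by (meson less_trans zero_less_one)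
    have "Q > 0" unfolding assms(5) using qp Ine I_def by (intro sum_pos) auto
    then show ?thesis using pp by simp
  qed
  have "real p * Q * (1 - 2 * real K * (real d + 1) / real mn) < real p * Q - c * (real p * Q)"
  proof -
    have "c < 2 * real K * (real d + 1) / real mn" unfolding c_def using mngt assms(1)
      by (intro divide_strict_right_mono) auto
    then have "c * (real p * Q) < 2 * real K * (real d + 1) / real mn * (real p * Q)"
      using Qpos by (rule mult_strict_right_mono)
    then show ?thesis by (simp add: right_diff_distrib mult.commute)
  qed
  then show ?thesis using lower1 upper unfolding W_def mn_def I_def by linarith
qed
end
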